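(* Let $S$ be a set and $s:I_m\to S$ a non-constant sequence. Let $A=s(1)$, let $m_1\ge 1$ be maximal with $s(1)=\cdots=s(m_1)=A$, let $m_2\ge 0$ be maximal with $s(m)=s(m-1)=\cdots=s(m-m_2+1)=A$, and put $m'=m_1+m_2$ (so $m'<m$). If $\sigma\in\mathscr{T}_m$ satisfies $$\{\sigma^{-1}(m),\sigma^{-1}(m-1),\ldots,\sigma^{-1}(m-m'+1)\}=\{1,2,\ldots,m_1\}\cup\{m,m-1,\ldots,m-m_2+1\},$$ then there exists $\tau\in\mathscr{T}_{m-m'}\circ\tau_{m-m_2}$ such that $\sigma s=\tau s$.
   Context: $\mathcal{S}_m$ is the group of bijections of $I_m=\{1,\ldots,m\}$, with $\sigma\circ\tau$ meaning apply $\tau$ first. $\mathscr{T}_m=\{\sigma\in\mathcal{S}_m \mid \exists t\in I_m:\ \sigma(1)>\sigma(2)>\cdots>\sigma(t)=1,\ \sigma(t)<\sigma(t+1)<\cdots<\sigma(m)\}$; for $k\le m$, $\mathscr{T}_k$ is identified with the permutations in $\mathcal{S}_m$ fixing all symbols $>k$ whose restriction to $I_k$ lies in $\mathscr{T}_k$. For $i\in I_m$, $\tau_i(j)=i+1-j$ for $j\le i$ and $\tau_i(j)=j$ for $j>i$. $\mathscr{T}_{k}\circ\tau_{i}=\{\rho\circ\tau_i\mid\rho\in\mathscr{T}_k\}$. $\mathcal{S}_m$ acts on sequences $s:I_m\to S$ by $\sigma s=s\circ\sigma^{-1}$. *)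

theory Defs
  imports "HOL-Combinatorics.Permutations"
begin

text \<open>Permutations of I_m = {1..m} are functions nat => nat that permute {1..m}
  (hence fix every other natural number). Composition is the usual function
  composition (apply the right factor first).\<close>

text \<open>The set T_k, viewed inside S_m: permutations fixing every symbol outside
  {1..k} whose restriction is a "valley" permutation.\<close>
definition Tperm :: "nat \<Rightarrow> (nat \<Rightarrow> nat) set" where
  "Tperm k = {\<sigma>. \<sigma> permutes {1..k} \<and>
     (\<exists>t\<in>{1..k}. (\<forall>i j. 1 \<le> i \<and> i < j \<and> j \<le> t \<longrightarrow> \<sigma> j < \<sigma> i)
                 \<and> \<sigma> t = 1
                 \<and> (\<forall>i j. t \<le> i \<and> i < j \<and> j \<le> k \<longrightarrow> \<sigma> i < \<sigma> j))}"

definition tau :: "nat \<Rightarrow> nat \<Rightarrow> nat" where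
  "tau i j = (if 1 \<le> j \<and> j \<le> i then i + 1 - j else j)"

definition Tcomp :: "nat \<Rightarrow> nat \<Rightarrow> (nat \<Rightarrow> nat) set" where
  "Tcomp k i = (\<lambda>\<rho>. \<rho> \<circ> tau i) ` Tperm k"

definition act :: "(nat \<Rightarrow> nat) \<Rightarrow> (nat \<Rightarrow> 'a) \<Rightarrow> (nat \<Rightarrow> 'a)" where
  "act \<sigma> s = s \<circ> inv \<sigma>"

end

theory Submission
  imports Defs
begin

lemma tau_permutes: "tau k permutes {1..k}"
proof (rule bij_imp_permutes)
  show "bij_betw (tau k) {1..k} {1..k}"
    by (rule bij_betw_byWitness[where f'="tau k"]) (auto simp: tau_def)
  show "\<And>x. x \<notin> {1..k} \<Longrightarrow> tau k x = x" by (auto simp: tau_def)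
qed

theorem mainTheorem12:
  fixes s :: "nat \<Rightarrow> 'a" and m m1 m2 :: nat and \<sigma> :: "nat \<Rightarrow> nat"
  assumes nonconst: "\<exists>i\<in>{1..m}. \<exists>j\<in>{1..m}. s i \<noteq> s j"
    and m1_ge: "1 \<le> m1" and m1_le: "m1 \<le> m"
    and m1_run: "\<forall>i\<in>{1..m1}. s i = s 1"
    and m1_max: "\<forall>k. k \<le> m \<and> (\<forall>i\<in>{1..k}. s i = s 1) \<longrightarrow> k \<le> m1"
    and m2_le: "m2 \<le> m"
    and m2_run: "\<forall>i\<in>{m - m2 + 1..m}. s i = s 1"
    and m2_max: "\<forall>k. k \<le> m \<and> (\<forall>i\<in>{m - k + 1..m}. s i = s 1) \<longrightarrow> k \<le> m2"
    and sigma_T: "\<sigma> \<in> Tperm m"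
    and sigma_cond: "inv \<sigma> ` {m - (m1 + m2) + 1..m} = {1..m1} \<union> {m - m2 + 1..m}"
  shows "\<exists>\<tau>\<in>Tcomp (m - (m1 + m2)) (m - m2). \<forall>i\<in>{1..m}. act \<sigma> s i = act \<tau> s i"
proof -
  define n where "n = m - (m1 + m2)"
  define L where "L = m - m2"
  define E where "E = {1..m1} \<union> {m - m2 + 1..m}"
  have sE: "\<And>j. j \<in> E \<Longrightarrow> s j = s 1" using m1_run m2_run unfolding E_def by (metis UnE)
  have lt: "m1 + m2 < m"
  proof (rule ccontr)
    assume "\<not> ?thesis"
    have allE: "i \<in> E" if hi: "i \<in> {1..m}" for i
    proof (cases "i \<le> m1")
      case True
      thus ?thesis using hi unfolding E_def by simp
    next
      case False
      hence "m - m2 + 1 \<le> i" using \<open>\<not> (m1 + m2 < m)\<close> by arith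
      thus ?thesis using hi unfolding E_def by simp
    qed
    obtain i j where ij: "i \<in> {1..m}" "j \<in> {1..m}" "s i \<noteq> s j" using nonconst by blast
    have "s i = s 1" by (rule sE[OF allE[OF ij(1)]])
    moreover have "s j = s 1" by (rule sE[OF allE[OF ij(2)]])
    ultimately show False using ij(3) by simp
  qed
  have n1: "1 \<le> n" using lt unfolding n_def by simp
  have TT: "\<sigma> permutes {1..m} \<and> (\<exists>t\<in>{1..m}. (\<forall>i j. 1 \<le> i \<and> i < j \<and> j \<le> t \<longrightarrow> \<sigma> j < \<sigma> i)
                 \<and> \<sigma> t = 1
                 \<and> (\<forall>i j. t \<le> i \<and> i < j \<and> j \<le> m \<longrightarrow> \<sigma> i < \<sigma> j))"
    using sigma_T unfolding Tperm_def mem_Collect_eq .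
  have perm: "\<sigma> permutes {1..m}" using TT by (rule conjunct1)
  obtain t where t: "t \<in> {1..m}" and P: "(\<forall>i j. 1 \<le> i \<and> i < j \<and> j \<le> t \<longrightarrow> \<sigma> j < \<sigma> i)
                 \<and> \<sigma> t = 1
                 \<and> (\<forall>i j. t \<le> i \<and> i < j \<and> j \<le> m \<longrightarrow> \<sigma> i < \<sigma> j)"
    using conjunct2[OF TT] by (rule bexE)
  have dec: "\<forall>i j. 1 \<le> i \<and> i < j \<and> j \<le> t \<longrightarrow> \<sigma> j < \<sigma> i" using P by (rule conjunct1)
  have t1: "\<sigma> t = 1" using P by simp
  have inc: "\<forall>i j. t \<le> i \<and> i < j \<and> j \<le> m \<longrightarrow> \<sigma> i < \<sigma> j" using P by simp
  have inS: "\<And>j. j \<in> {1..m} \<Longrightarrow> \<sigma> j \<in> {1..m}" using permutes_in_image[OF perm] by blast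
  have invs: "\<And>j. \<sigma> (inv \<sigma> j) = j" by (rule permutes_inverses(1)[OF perm])
  have invs2: "\<And>j. inv \<sigma> (\<sigma> j) = j" by (rule permutes_inverses(2)[OF perm])
  have condE: "inv \<sigma> ` {n + 1..m} = E" using sigma_cond unfolding n_def E_def by simp
  have big_E: "\<And>j. j \<in> {1..m} \<Longrightarrow> n < \<sigma> j \<Longrightarrow> j \<in> E"
  proof -
    fix j assume "j \<in> {1..m}" "n < \<sigma> j"
    hence "\<sigma> j \<in> {n+1..m}" using inS[of j] by auto
    hence "inv \<sigma> (\<sigma> j) \<in> E" using condE by blast
    thus "j \<in> E" using invs2 by simp
  qed
  have E_big: "\<And>j. j \<in> E \<Longrightarrow> n < \<sigma> j"
  proof -
    fix j assume "j \<in> E"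
    then obtain v where "v \<in> {n+1..m}" "j = inv \<sigma> v" using condE by blast
    thus "n < \<sigma> j" using invs by simp
  qed
  have midE: "\<And>j. j \<in> E \<longleftrightarrow> j \<in> {1..m} \<and> \<not> (m1 < j \<and> j \<le> L)"
    unfolding E_def L_def using lt by auto
  have tmid: "m1 < t \<and> t \<le> L"
  proof (rule ccontr)
    assume "\<not> ?thesis"
    hence "t \<in> E" using midE t by blast
    from E_big[OF this] t1 n1 show False by simp
  qed
  define \<rho> where "\<rho> k = (if 1 \<le> k \<and> k \<le> n then \<sigma> (L + 1 - k) else k)" for k
  have Ln: "L = n + m1" unfolding L_def n_def using lt by simp
  have rho_in: "\<rho> ` {1..n} \<subseteq> {1..n}"
  proof
    fix x assume "x \<in> \<rho> ` {1..n}"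
    then obtain k where k: "k \<in> {1..n}" "x = \<rho> k" by blast
    have j1: "L + 1 - k \<in> {1..m}" using k Ln lt unfolding n_def by auto
    have "m1 < L + 1 - k \<and> L + 1 - k \<le> L" using k Ln by auto
    hence j2: "\<not> (L + 1 - k) \<in> E" using midE by blast
    note j = j1 j2
    have "\<sigma> (L + 1 - k) \<le> n" using big_E[OF j(1)] j(2) not_le by blast
    moreover have "\<sigma> (L + 1 - k) \<ge> 1" using inS[OF j(1)] by simp
    ultimately show "x \<in> {1..n}" using k unfolding \<rho>_def by simp
  qed
  have rho_inj: "inj_on \<rho> {1..n}"
  proof (rule inj_onI)
    fix x y assume "x \<in> {1..n}" "y \<in> {1..n}" "\<rho> x = \<rho> y"
    hence "\<sigma> (L + 1 - x) = \<sigma> (L + 1 - y)" unfolding \<rho>_def by simp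
    hence "inv \<sigma> (\<sigma> (L + 1 - x)) = inv \<sigma> (\<sigma> (L + 1 - y))" by simp
    hence "L + 1 - x = L + 1 - y" by (simp only: invs2)
    thus "x = y" using \<open>x \<in> {1..n}\<close> \<open>y \<in> {1..n}\<close> Ln by auto
  qed
  have rho_perm: "\<rho> permutes {1..n}"
  proof (rule bij_imp_permutes)
    show "bij_betw \<rho> {1..n} {1..n}"
      using rho_inj rho_in endo_inj_surj[of "{1..n}" \<rho>] by (simp add: bij_betw_def)
    show "\<And>x. x \<notin> {1..n} \<Longrightarrow> \<rho> x = x" unfolding \<rho>_def by auto
  qed
  have rho_T: "\<rho> \<in> Tperm n"
    unfolding Tperm_def
  proof (intro CollectI conjI rho_perm bexI[where x="L + 1 - t"])
    show "L + 1 - t \<in> {1..n}" using tmid Ln by auto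
    show "\<rho> (L + 1 - t) = 1" using tmid Ln t1 unfolding \<rho>_def by auto
    show "\<forall>i j. 1 \<le> i \<and> i < j \<and> j \<le> L + 1 - t \<longrightarrow> \<rho> j < \<rho> i"
    proof (intro allI impI)
      fix i j assume h: "1 \<le> i \<and> i < j \<and> j \<le> L + 1 - t"
      hence "\<sigma> (L + 1 - j) < \<sigma> (L + 1 - i)"
        using h tmid Ln by (intro inc[rule_format]) (auto simp: L_def)
      thus "\<rho> j < \<rho> i" using h tmid Ln unfolding \<rho>_def by auto
    qed
    show "\<forall>i j. L + 1 - t \<le> i \<and> i < j \<and> j \<le> n \<longrightarrow> \<rho> i < \<rho> j"
    proof (intro allI impI)
      fix i j assume h: "L + 1 - t \<le> i \<and> i < j \<and> j \<le> n"
      have "\<sigma> (L + 1 - i) < \<sigma> (L + 1 - j)"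
        using h tmid Ln by (intro dec[rule_format]) auto
      thus "\<rho> i < \<rho> j" using h tmid Ln unfolding \<rho>_def by auto
    qed
  qed
  define \<tau> where "\<tau> = \<rho> \<circ> tau L"
  have tauT: "\<tau> \<in> Tcomp n L" unfolding Tcomp_def \<tau>_def using rho_T by blast
  have tperm: "\<tau> permutes {1..m}" unfolding \<tau>_def
    apply (rule permutes_compose)
     apply (rule permutes_subset[OF tau_permutes]) using L_def apply auto[1]
    apply (rule permutes_subset[OF rho_perm]) using n_def apply auto
    done
  have tau_mid: "\<And>j. m1 < j \<Longrightarrow> j \<le> L \<Longrightarrow> \<tau> j = \<sigma> j"
    unfolding \<tau>_def \<rho>_def tau_def using Ln by auto
  have tau_E: "\<And>j. j \<in> E \<Longrightarrow> n < \<tau> j"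
  proof -
    fix j assume "j \<in> E"
    hence j: "j \<in> {1..m}" "\<not> (m1 < j \<and> j \<le> L)" using midE by auto
    show "n < \<tau> j"
    proof (cases "j \<le> m1")
      case True
      hence "tau L j = L + 1 - j" using j Ln unfolding tau_def by auto
      moreover have "n < L + 1 - j" using True Ln by auto
      ultimately show ?thesis unfolding \<tau>_def \<rho>_def by auto
    next
      case False
      hence "L < j" using j by auto
      thus ?thesis unfolding \<tau>_def \<rho>_def tau_def using Ln by auto
    qed
  qed
  have "\<forall>i\<in>{1..m}. act \<sigma> s i = act \<tau> s i"
  proof
    fix i assume i: "i \<in> {1..m}"
    define j where "j = inv \<sigma> i"
    have sj: "\<sigma> j = i" using invs j_def by simp
    have jm: "j \<in> {1..m}" using permutes_in_image[OF permutes_inv[OF perm]] i unfolding j_def by blast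
    define j' where "j' = inv \<tau> i"
    have tj: "\<tau> j' = i" unfolding j'_def by (rule permutes_inverses(1)[OF tperm])
    have jm': "j' \<in> {1..m}" using permutes_in_image[OF permutes_inv[OF tperm]] i unfolding j'_def by blast
    show "act \<sigma> s i = act \<tau> s i"
    proof (cases "i \<le> n")
      case True
      hence "j \<notin> E" using E_big[of j] sj by auto
      hence "m1 < j \<and> j \<le> L" using midE jm by blast
      hence "\<tau> j = i" using tau_mid sj by simp
      hence "inv \<tau> i = j" using permutes_inv_eq[OF tperm] by blast
      thus ?thesis unfolding act_def j_def by simp
    next
      case False
      hence "j \<in> E" using big_E jm sj by simp
      moreover have "j' \<in> E"
      proof (rule ccontr)
        assume "j' \<notin> E"
        hence "m1 < j' \<and> j' \<le> L" using midE jm' by blast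
        hence "\<tau> j' = \<sigma> j'" using tau_mid by simp
        hence "\<sigma> j' > n" using tj False by simp
        with big_E jm' \<open>j' \<notin> E\<close> show False by blast
      qed
      ultimately show ?thesis unfolding act_def j_def j'_def using sE by simp
    qed
  qed
  thus ?thesis using tauT unfolding n_def L_def by blast
qed

end
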